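(* Let $d\ge2$, let $\Delta^d$ be the probability simplex in $\mathbb{R}^d$, and let $\pi\in\Delta^d$ have all coordinates positive. Let $\mathcal{A}$ be a coin-betting algorithm that, given past coin outcomes $c'_1,\dots,c'_{t-1}$, outputs a bet $x_t\in\mathbb{R}$, and suppose that for some function $f_T:\mathbb{R}\to\mathbb{R}$ it guarantees, for every sequence $c'_1,\dots,c'_T\in[-1,1]$ (where $c'_t$ may depend on $x_1,\dots,x_t$), $1+\sum_{t=1}^Tc'_tx_t\ge\exp\big(f_T(\sum_{t=1}^Tc'_t)\big)$. Run $d$ copies of $\mathcal{A}$; at round $t$ let $x_{t,i}$ be the bet of copy $i$, set $\hat p_{t,i}=\pi_i\max(x_{t,i},0)$, predict $p_t=\hat p_t/\|\hat p_t\|_1$ if $\hat p_t\ne0$ and $p_t=\pi$ otherwise, receive $g_t\in[0,1]^d$, and feed copy $i$ the coin outcome $c_{t,i}=\langle g_t,p_t\rangle-g_{t,i}$ if $x_{t,i}>0$ and $c_{t,i}=\max(\langle g_t,p_t\rangle-g_{t,i},0)$ if $x_{t,i}\le0$. Then for every concave non-decreasing $h:\mathbb{R}\to\mathbb{R}$ satisfying $x\le h(f_T(x))$ for all $x\in[-T,T]$, and every $u\in\Delta^d$, \[ \sum_{t=1}^T\langle g_t,p_t-u\rangle\le h\big(\mathrm{KL}(u;\pi)\big). \]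
   Context: $\mathrm{KL}(u;\pi)=\sum_{i=1}^du_i\ln\frac{u_i}{\pi_i}$ with the convention $0\ln0=0$. *)

theory Defs
  imports "HOL-Analysis.Analysis"
begin

text \<open>Coordinates of vectors in R^d are indexed by 0..d-1; rounds by 0..T-1.
A coin-betting algorithm is a deterministic map from the list of past coin
outcomes to a real bet.\<close>

type_synonym coin_alg = "real list \<Rightarrow> real"

definition KL :: "nat \<Rightarrow> (nat \<Rightarrow> real) \<Rightarrow> (nat \<Rightarrow> real) \<Rightarrow> real" where
  "KL d u \<pi> = (\<Sum>i<d. if u i = 0 then 0 else u i * ln (u i / \<pi> i))"

definition in_simplex :: "nat \<Rightarrow> (nat \<Rightarrow> real) \<Rightarrow> bool" where
  "in_simplex d u \<longleftrightarrow> (\<forall>i<d. 0 \<le> u i) \<and> (\<Sum>i<d. u i) = 1"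

definition coin_guarantee :: "coin_alg \<Rightarrow> nat \<Rightarrow> (real \<Rightarrow> real) \<Rightarrow> bool" where
  "coin_guarantee A T f \<longleftrightarrow>
     (\<forall>c::nat \<Rightarrow> real. (\<forall>t<T. c t \<in> {-1..1}) \<longrightarrow>
        exp (f (\<Sum>t<T. c t)) \<le> 1 + (\<Sum>t<T. c t * A (map c [0..<t])))"

definition pred :: "nat \<Rightarrow> (nat \<Rightarrow> real) \<Rightarrow> (nat \<Rightarrow> real) \<Rightarrow> (nat \<Rightarrow> real)" where
  "pred d \<pi> x =
     (let ph = (\<lambda>i. \<pi> i * max (x i) 0);
          n = (\<Sum>j<d. \<bar>ph j\<bar>)
      in if (\<forall>i<d. ph i = 0) then \<pi> else (\<lambda>i. ph i / n))"

definition coin_out :: "nat \<Rightarrow> (nat \<Rightarrow> real) \<Rightarrow> (nat \<Rightarrow> real) \<Rightarrow> real \<Rightarrow> nat \<Rightarrow> real" where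
  "coin_out d gt p xi i =
     (let v = (\<Sum>j<d. gt j * p j) - gt i in if xi > 0 then v else max v 0)"

primrec hists :: "coin_alg \<Rightarrow> nat \<Rightarrow> (nat \<Rightarrow> real) \<Rightarrow> (nat \<Rightarrow> nat \<Rightarrow> real) \<Rightarrow> nat \<Rightarrow> nat \<Rightarrow> real list" where
  "hists A d \<pi> g 0 = (\<lambda>i. [])"
| "hists A d \<pi> g (Suc t) =
     (let H = hists A d \<pi> g t;
          x = (\<lambda>i. A (H i));
          p = pred d \<pi> x
      in (\<lambda>i. H i @ [coin_out d (g t) p (x i) i]))"

definition bet :: "coin_alg \<Rightarrow> nat \<Rightarrow> (nat \<Rightarrow> real) \<Rightarrow> (nat \<Rightarrow> nat \<Rightarrow> real) \<Rightarrow> nat \<Rightarrow> nat \<Rightarrow> real" where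
  "bet A d \<pi> g t i = A (hists A d \<pi> g t i)"

definition prediction :: "coin_alg \<Rightarrow> nat \<Rightarrow> (nat \<Rightarrow> real) \<Rightarrow> (nat \<Rightarrow> nat \<Rightarrow> real) \<Rightarrow> nat \<Rightarrow> nat \<Rightarrow> real" where
  "prediction A d \<pi> g t = pred d \<pi> (bet A d \<pi> g t)"

end

theory Submission
  imports Defs
begin

lemma hists_Suc:
  "hists A d \<pi> g (Suc t) i = hists A d \<pi> g t i @ [coin_out d (g t) (prediction A d \<pi> g t) (bet A d \<pi> g t i) i]"
proof -
  have "bet A d \<pi> g t = (\<lambda>i. A (hists A d \<pi> g t i))" by (rule ext) (simp add: bet_def)
  then show ?thesis by (simp add: Let_def bet_def prediction_def)
qed

lemma hists_eq:
  "hists A d \<pi> g t i = map (\<lambda>s. coin_out d (g s) (prediction A d \<pi> g s) (bet A d \<pi> g s i) i) [0..<t]"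
  by (induction t) (simp_all only: hists_Suc, simp_all)

lemma pred_simplex:
  assumes "in_simplex d \<pi>" "\<forall>i<d. \<pi> i > 0"
  shows "in_simplex d (pred d \<pi> x)"
proof (cases "\<forall>i<d. \<pi> i * max (x i) 0 = 0")
  case True then show ?thesis using assms by (simp add: pred_def)
next
  case False
  define ph where "ph = (\<lambda>i. \<pi> i * max (x i) 0)"
  have ph0: "\<forall>i<d. ph i \<ge> 0" using assms unfolding ph_def by (metis less_imp_le max.cobounded2 mult_nonneg_nonneg)
  then have abs: "(\<Sum>j<d. \<bar>ph j\<bar>) = (\<Sum>j<d. ph j)" by (intro sum.cong) auto
  from False obtain k where k: "k < d" "ph k \<noteq> 0" unfolding ph_def by auto
  have "ph k \<le> (\<Sum>j<d. ph j)"
    using k ph0 by (intro member_le_sum) auto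
  then have npos: "(\<Sum>j<d. ph j) > 0" using k ph0 by force
  have e: "pred d \<pi> x = (\<lambda>i. ph i / (\<Sum>j<d. ph j))"
    using False abs unfolding pred_def Let_def ph_def by auto
  show ?thesis unfolding in_simplex_def e
    using ph0 npos by (auto simp: sum_divide_distrib[symmetric])
qed

lemma pred_key:
  assumes "in_simplex d \<pi>" "\<forall>i<d. \<pi> i > 0"
  shows "(\<Sum>i<d. \<pi> i * coin_out d gt (pred d \<pi> x) (x i) i * x i) \<le> 0"
proof (cases "\<forall>i<d. \<pi> i * max (x i) 0 = 0")
  case True
  have "\<pi> i * coin_out d gt (pred d \<pi> x) (x i) i * x i \<le> 0" if "i < d" for i
  proof -
    have "x i \<le> 0" using True assms that by (metis max_def mult_eq_0_iff order_less_irrefl order.strict_implies_not_eq le_cases)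
    then have "coin_out d gt (pred d \<pi> x) (x i) i \<ge> 0" by (simp add: coin_out_def Let_def)
    moreover have "\<pi> i > 0" using assms that by auto
    ultimately show ?thesis using \<open>x i \<le> 0\<close>
      by (simp add: mult_nonneg_nonpos)
  qed
  then show ?thesis by (intro sum_nonpos) auto
next
  case False
  define ph where "ph = (\<lambda>i. \<pi> i * max (x i) 0)"
  define n where "n = (\<Sum>j<d. ph j)"
  define p where "p = pred d \<pi> x"
  define v where "v = (\<lambda>i. (\<Sum>j<d. gt j * p j) - gt i)"
  have ph0: "\<forall>i<d. ph i \<ge> 0" using assms unfolding ph_def by (metis less_imp_le max.cobounded2 mult_nonneg_nonneg)
  then have abs: "(\<Sum>j<d. \<bar>ph j\<bar>) = (\<Sum>j<d. ph j)" by (intro sum.cong) auto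
  from False obtain k where k: "k < d" "ph k \<noteq> 0" unfolding ph_def by auto
  have "ph k \<le> (\<Sum>j<d. ph j)"
    using k ph0 by (intro member_le_sum) auto
  then have npos: "n > 0" using k ph0 unfolding n_def by force
  have e: "p = (\<lambda>i. ph i / n)"
    using False abs unfolding p_def pred_def Let_def n_def ph_def by auto
  have sp: "(\<Sum>i<d. p i) = 1" using pred_simplex[OF assms, of x] unfolding p_def in_simplex_def by auto
  have le: "\<pi> i * coin_out d gt p (x i) i * x i \<le> ph i * v i" if "i < d" for i
  proof (cases "x i > 0")
    case True then show ?thesis by (simp add: coin_out_def Let_def ph_def v_def)
  next
    case F: False
    have "\<pi> i > 0" using assms that by auto
    then have "\<pi> i * coin_out d gt p (x i) i * x i \<le> 0"
      using F by (simp add: coin_out_def Let_def mult_nonneg_nonpos)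
    then show ?thesis using F by (simp add: ph_def)
  qed
  have "(\<Sum>i<d. ph i * v i) = n * (\<Sum>i<d. p i * v i)"
    using npos by (simp add: e sum_distrib_left)
  also have "(\<Sum>i<d. p i * v i) = (\<Sum>j<d. gt j * p j) * (\<Sum>i<d. p i) - (\<Sum>i<d. gt i * p i)"
    by (simp add: v_def right_diff_distrib sum_subtractf sum_distrib_right[symmetric] mult.commute)
  also have "\<dots> = 0" using sp by simp
  finally have "(\<Sum>i<d. ph i * v i) = 0" by simp
  moreover have "(\<Sum>i<d. \<pi> i * coin_out d gt p (x i) i * x i) \<le> (\<Sum>i<d. ph i * v i)"
    using le by (intro sum_mono) auto
  ultimately show ?thesis unfolding p_def by simp
qed


theorem mainTheorem19:
  fixes A :: coin_alg and d T :: nat and \<pi> u :: "nat \<Rightarrow> real"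
    and f h :: "real \<Rightarrow> real" and g :: "nat \<Rightarrow> nat \<Rightarrow> real"
  assumes "d \<ge> 2"
    and "in_simplex d \<pi>" and "\<forall>i<d. \<pi> i > 0"
    and "coin_guarantee A T f"
    and "\<forall>t<T. \<forall>i<d. g t i \<in> {0..1}"
    and "concave_on UNIV h" and "mono h"
    and "\<forall>x\<in>{-real T..real T}. x \<le> h (f x)"
    and "in_simplex d u"
  shows "(\<Sum>t<T. \<Sum>i<d. g t i * (prediction A d \<pi> g t i - u i)) \<le> h (KL d u \<pi>)"
proof -
  note pis = assms(2,3)
  define x where "x = bet A d \<pi> g"
  define p where "p = prediction A d \<pi> g"
  define c where "c = (\<lambda>t i. coin_out d (g t) (p t) (x t i) i)"
  define S where "S = (\<lambda>t. \<Sum>j<d. g t j * p t j)"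
  define G where "G = (\<lambda>i. \<Sum>t<T. c t i)"
  have psim: "in_simplex d (p t)" for t
    unfolding p_def prediction_def by (rule pred_simplex[OF pis])
  have S01: "S t \<in> {0..1}" if "t < T" for t
  proof -
    have "S t \<ge> 0" unfolding S_def using psim[of t] assms(5) that
      by (auto simp: in_simplex_def intro!: sum_nonneg)
    moreover have "S t \<le> (\<Sum>j<d. p t j)" unfolding S_def
    proof (rule sum_mono)
      fix j assume "j \<in> {..<d}"
      then show "g t j * p t j \<le> p t j" using psim[of t] assms(5) that
        by (auto simp: in_simplex_def intro!: mult_left_le_one_le)
    qed
    ultimately show ?thesis using psim[of t] by (simp add: in_simplex_def)
  qed
  have crange: "c t i \<in> {-1..1}" and cge: "c t i \<ge> S t - g t i" if "t < T" "i < d" for t i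
  proof -
    have "g t i \<in> {0..1}" using assms(5) that by auto
    then show "c t i \<in> {-1..1}" "c t i \<ge> S t - g t i"
      using S01[OF that(1)] unfolding c_def coin_out_def Let_def S_def
      by auto
  qed
  have Grange: "G i \<in> {-real T..real T}" if "i < d" for i
  proof -
    have "\<bar>G i\<bar> \<le> (\<Sum>t<T. \<bar>c t i\<bar>)" unfolding G_def by (rule sum_abs)
    also have "\<dots> \<le> (\<Sum>t<T. 1)" using crange that by (intro sum_mono) force
    finally show ?thesis by auto
  qed
  have guar: "exp (f (G i)) \<le> 1 + (\<Sum>t<T. c t i * x t i)" if "i < d" for i
  proof -
    have "exp (f (\<Sum>t<T. c t i)) \<le> 1 + (\<Sum>t<T. c t i * A (map (\<lambda>s. c s i) [0..<t]))"
      using assms(4) crange that unfolding coin_guarantee_def by auto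
    moreover have "A (map (\<lambda>s. c s i) [0..<t]) = x t i" for t
      unfolding x_def c_def p_def by (subst bet_def, subst hists_eq) simp
    ultimately show ?thesis unfolding G_def by simp
  qed
  have key: "(\<Sum>i<d. \<pi> i * c t i * x t i) \<le> 0" for t
    using pred_key[OF pis, of "g t" "x t"] unfolding c_def p_def prediction_def x_def by simp
  have pisum: "(\<Sum>i<d. \<pi> i) = 1" using pis by (simp add: in_simplex_def)
  have weighted: "(\<Sum>i<d. \<pi> i * exp (f (G i))) \<le> 1"
  proof -
    have "(\<Sum>i<d. \<pi> i * exp (f (G i))) \<le> (\<Sum>i<d. \<pi> i * (1 + (\<Sum>t<T. c t i * x t i)))"
      using guar pis by (intro sum_mono mult_left_mono) auto
    also have "\<dots> = (\<Sum>i<d. \<pi> i) + (\<Sum>i<d. \<Sum>t<T. \<pi> i * c t i * x t i)"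
      by (simp add: distrib_left sum.distrib sum_distrib_left mult.assoc)
    also have "\<dots> = (\<Sum>i<d. \<pi> i) + (\<Sum>t<T. \<Sum>i<d. \<pi> i * c t i * x t i)"
      by (simp only: sum.swap[where A="{..<d}" and B="{..<T}"])
    also have "\<dots> \<le> 1 + 0" using pisum key sum_nonpos[of "{..<T}" "\<lambda>t. \<Sum>i<d. \<pi> i * c t i * x t i"] by simp
    finally show ?thesis by simp
  qed
  have usum: "(\<Sum>i<d. u i) = 1" and u0: "\<forall>i<d. u i \<ge> 0" using assms(9) by (auto simp: in_simplex_def)
  have step1: "(\<Sum>t<T. \<Sum>i<d. g t i * (p t i - u i)) \<le> (\<Sum>i<d. u i * G i)"
  proof -
    have "(\<Sum>i<d. g t i * (p t i - u i)) = (\<Sum>i<d. u i * (S t - g t i))" for t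
    proof -
      have "(\<Sum>i<d. g t i * (p t i - u i)) = S t - (\<Sum>i<d. g t i * u i)"
        by (simp add: S_def right_diff_distrib sum_subtractf)
      also have "\<dots> = S t * (\<Sum>i<d. u i) - (\<Sum>i<d. g t i * u i)" using usum by simp
      also have "\<dots> = (\<Sum>i<d. u i * (S t - g t i))"
        by (simp add: right_diff_distrib sum_subtractf sum_distrib_left mult.commute)
      finally show ?thesis .
    qed
    then have "(\<Sum>t<T. \<Sum>i<d. g t i * (p t i - u i)) = (\<Sum>t<T. \<Sum>i<d. u i * (S t - g t i))" by simp
    also have "\<dots> \<le> (\<Sum>t<T. \<Sum>i<d. u i * c t i)"
      using cge u0 by (intro sum_mono mult_left_mono) auto
    also have "\<dots> = (\<Sum>i<d. \<Sum>t<T. u i * c t i)"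
      by (rule sum.swap)
    also have "\<dots> = (\<Sum>i<d. u i * G i)"
      unfolding G_def by (simp add: sum_distrib_left)
    finally show ?thesis .
  qed
  have step2: "(\<Sum>i<d. u i * G i) \<le> (\<Sum>i<d. u i * h (f (G i)))"
    using Grange assms(8) u0 by (intro sum_mono mult_left_mono) auto
  have step3: "(\<Sum>i<d. u i * h (f (G i))) \<le> h (\<Sum>i<d. u i * f (G i))"
  proof -
    have "(\<Sum>i<d. u i * h (f (G i))) \<le> h (\<Sum>i\<in>{..<d}. u i *\<^sub>R f (G i))"
      using assms(1) usum u0 by (intro concave_on_sum[OF _ _ assms(6)]) auto
    then show ?thesis by simp
  qed
  have step4: "(\<Sum>i<d. u i * f (G i)) \<le> KL d u \<pi>"
  proof -
    have trm: "u i * f (G i) \<le> (if u i = 0 then 0 else u i * ln (u i / \<pi> i)) + (\<pi> i * exp (f (G i)) - u i)"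
      if "i < d" for i
    proof (cases "u i = 0")
      case True then show ?thesis using pis that by (simp add: less_imp_le)
    next
      case False
      have up: "u i > 0" using False u0 that by (simp add: order_le_neq_trans)
      have pp: "\<pi> i > 0" using pis that by auto
      have "ln (\<pi> i * exp (f (G i)) / u i) \<le> \<pi> i * exp (f (G i)) / u i - 1"
        using up pp by (intro ln_le_minus_one) simp
      moreover have "ln (\<pi> i * exp (f (G i)) / u i) = f (G i) - ln (u i / \<pi> i)"
        using up pp by (simp add: ln_div ln_mult)
      ultimately have "f (G i) - ln (u i / \<pi> i) \<le> \<pi> i * exp (f (G i)) / u i - 1" by simp
      then have "u i * (f (G i) - ln (u i / \<pi> i)) \<le> u i * (\<pi> i * exp (f (G i)) / u i - 1)"
        using up by (intro mult_left_mono) auto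
      then show ?thesis using False up by (simp add: algebra_simps)
    qed
    have "(\<Sum>i<d. u i * f (G i)) \<le> (\<Sum>i<d. (if u i = 0 then 0 else u i * ln (u i / \<pi> i)) + (\<pi> i * exp (f (G i)) - u i))"
      using trm by (intro sum_mono) auto
    also have "\<dots> = KL d u \<pi> + ((\<Sum>i<d. \<pi> i * exp (f (G i))) - 1)"
      by (simp add: KL_def sum.distrib sum_subtractf usum)
    also have "\<dots> \<le> KL d u \<pi>" using weighted by simp
    finally show ?thesis .
  qed
  have "h (\<Sum>i<d. u i * f (G i)) \<le> h (KL d u \<pi>)" using step4 assms(7) by (rule monoD[rotated])
  then show ?thesis using step1 step2 step3 unfolding p_def by linarith
qed

end
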